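(* No deterministic strategyproof mechanism for locating an obnoxious facility on $[0,1]$ has an approximation ratio better than $(2^p+1)^{1/p}$ for the $L_p$ social cost, for any $1\le p<\infty$. No deterministic strategyproof mechanism has an approximation ratio better than $2$ for the $L_\infty$ social cost.
   Context: Agents $i=1,\dots,n$ have private locations $x_i\in[0,1]$; a deterministic mechanism $f:[0,1]^n\to[0,1]$ outputs the facility location. Agent cost $c(x_i,y)=1-|x_i-y|$ (equivalently utility $|x_i-y|$). $f$ is strategyproof if for all $\mathbf x$, $i$, $x_i'$: $|x_i-f(\mathbf x)|\ge|x_i-f(x_i',\mathbf x_{-i})|$. $L_p$ social cost $\mathrm{sc}_p(y,\mathbf x)=(\sum_ic(x_i,y)^p)^{1/p}$, $\mathrm{sc}_\infty(y,\mathbf x)=\max_ic(x_i,y)$. $f$ has approximation ratio $\alpha$ if $\mathrm{sc}_p(f(\mathbf x),\mathbf x)\le\alpha\min_{z\in[0,1]}\mathrm{sc}_p(z,\mathbf x)$ for all profiles (over all numbers of agents). *)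

theory Defs
  imports Complex_Main
begin

definition valid_profile :: "real list \<Rightarrow> bool" where
  "valid_profile xs \<longleftrightarrow> set xs \<subseteq> {0..1}"

definition mechanism :: "(real list \<Rightarrow> real) \<Rightarrow> bool" where
  "mechanism f \<longleftrightarrow> (\<forall>xs. valid_profile xs \<longrightarrow> f xs \<in> {0..1})"

definition agent_cost :: "real \<Rightarrow> real \<Rightarrow> real" where
  "agent_cost x y = 1 - \<bar>x - y\<bar>"

definition strategyproof :: "(real list \<Rightarrow> real) \<Rightarrow> bool" where
  "strategyproof f \<longleftrightarrow>
     (\<forall>xs i x'. valid_profile xs \<longrightarrow> i < length xs \<longrightarrow> x' \<in> {0..1} \<longrightarrow>
        \<bar>xs ! i - f (xs[i := x'])\<bar> \<le> \<bar>xs ! i - f xs\<bar>)"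

definition sc_p :: "real \<Rightarrow> real \<Rightarrow> real list \<Rightarrow> real" where
  "sc_p p y xs = (\<Sum>x\<leftarrow>xs. agent_cost x y powr p) powr (1 / p)"

definition sc_inf :: "real \<Rightarrow> real list \<Rightarrow> real" where
  "sc_inf y xs = Max (set (map (\<lambda>x. agent_cost x y) xs))"

definition approx_ratio_p :: "real \<Rightarrow> (real list \<Rightarrow> real) \<Rightarrow> real \<Rightarrow> bool" where
  "approx_ratio_p p f \<alpha> \<longleftrightarrow>
     (\<forall>xs. valid_profile xs \<and> xs \<noteq> [] \<longrightarrow>
        sc_p p (f xs) xs \<le> \<alpha> * (INF z\<in>{0..1}. sc_p p z xs))"

definition approx_ratio_inf :: "(real list \<Rightarrow> real) \<Rightarrow> real \<Rightarrow> bool" where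
  "approx_ratio_inf f \<alpha> \<longleftrightarrow>
     (\<forall>xs. valid_profile xs \<and> xs \<noteq> [] \<longrightarrow>
        sc_inf (f xs) xs \<le> \<alpha> * (INF z\<in>{0..1}. sc_inf z xs))"

end

theory Submission imports Defs begin

lemma sp1:
  assumes "strategyproof f" "a \<in> {0..1}" "b \<in> {0..1}" "a' \<in> {0..1}"
  shows "\<bar>a - f [a',b]\<bar> \<le> \<bar>a - f [a,b]\<bar>"
  using assms unfolding strategyproof_def valid_profile_def
  apply (erule_tac x="[a,b]" in allE) apply (erule_tac x=0 in allE) apply (erule_tac x=a' in allE)
  by auto

lemma sp2:
  assumes "strategyproof f" "a \<in> {0..1}" "b \<in> {0..1}" "b' \<in> {0..1}"
  shows "\<bar>b - f [a,b']\<bar> \<le> \<bar>b - f [a,b]\<bar>"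
  using assms unfolding strategyproof_def valid_profile_def
  apply (erule_tac x="[a,b]" in allE) apply (erule_tac x=1 in allE) apply (erule_tac x=b' in allE)
  by auto

lemma rng:
  assumes "mechanism f" "a \<in> {0..1}" "b \<in> {0..1}"
  shows "f [a,b] \<in> {0..1}"
  using assms unfolding mechanism_def valid_profile_def by auto

lemma key:
  assumes m: "mechanism f" and s: "strategyproof f" and f00: "f [0,0] = 1" and f11: "f [1,1] = 0"
  shows "(\<forall>x. 0 \<le> x \<and> x < 1/2 \<longrightarrow> f [x,1] = 1) \<or> (\<forall>x. 1/2 < x \<and> x \<le> 1 \<longrightarrow> f [0,x] = 0)"
proof -
  define u where "u = f [0,1]"
  have u01: "u \<in> {0..1}" using rng[OF m, of 0 1] by (simp add: u_def)
  have row1: "f [x,1] = u" if "0 \<le> x" "x < u/2" for x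
  proof -
    have x1: "x \<in> {0..1}" using that u01 by auto
    have a: "\<bar>x - u\<bar> \<le> \<bar>x - f [x,1]\<bar>" using sp1[OF s x1, of 1 0] by (simp add: u_def)
    have b: "\<bar>0 - f [x,1]\<bar> \<le> \<bar>0 - u\<bar>" using sp1[OF s, of 0 1 x] x1 by (simp add: u_def)
    have c: "f [x,1] \<in> {0..1}" using rng[OF m x1, of 1] by simp
    show ?thesis using a b c that u01 by (auto simp: abs_if split: if_splits)
  qed
  have row0: "f [x,1] = 0" if "x \<le> 1" "u/2 < x" for x
  proof -
    have x1: "x \<in> {0..1}" using that u01 by auto
    have a: "\<bar>x - 0\<bar> \<le> \<bar>x - f [x,1]\<bar>" using sp1[OF s x1, of 1 1] f11 by simp
    have b: "\<bar>0 - f [x,1]\<bar> \<le> \<bar>0 - u\<bar>" using sp1[OF s, of 0 1 x] x1 by (simp add: u_def)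
    have c: "f [x,1] \<in> {0..1}" using rng[OF m x1, of 1] by simp
    show ?thesis using a b c that u01 by (auto simp: abs_if split: if_splits)
  qed
  have col1: "f [0,x] = 1" if "0 \<le> x" "x < (1+u)/2" for x
  proof -
    have x1: "x \<in> {0..1}" using that u01 by auto
    have a: "\<bar>x - 1\<bar> \<le> \<bar>x - f [0,x]\<bar>" using sp2[OF s _ x1, of 0 0] f00 by simp
    have b: "\<bar>1 - f [0,x]\<bar> \<le> \<bar>1 - u\<bar>" using sp2[OF s, of 0 1 x] x1 by (simp add: u_def)
    have c: "f [0,x] \<in> {0..1}" using rng[OF m _ x1, of 0] by simp
    show ?thesis using a b c that u01 by (auto simp: abs_if split: if_splits)
  qed
  show ?thesis
  proof (cases "u = 1")
    case True
    then show ?thesis using row1 by auto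
  next
    case F1: False
    show ?thesis
    proof (cases "u = 0")
      case True
      have "f [0,x] = 0" if "1/2 < x" "x \<le> 1" for x
      proof -
        have x1: "x \<in> {0..1}" using that by auto
        have a: "\<bar>x - u\<bar> \<le> \<bar>x - f [0,x]\<bar>" using sp2[OF s _ x1, of 0 1] by (simp add: u_def)
        have b: "\<bar>1 - f [0,x]\<bar> \<le> \<bar>1 - u\<bar>" using sp2[OF s, of 0 1 x] x1 by (simp add: u_def)
        have c: "f [0,x] \<in> {0..1}" using rng[OF m _ x1, of 0] by simp
        show ?thesis using a b c that True by (auto simp: abs_if split: if_splits)
      qed
      then show ?thesis by auto
    next
      case F0: False
      have u: "0 < u" "u < 1" using F0 F1 u01 by auto
      define x1 where "x1 = (u+1)/4"
      define x2 where "x2 = (2+u)/4"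
      have X1: "x1 \<in> {0..1}" "u/2 < x1" "x1 < 1/2" using u by (auto simp: x1_def)
      have X2: "x2 \<in> {0..1}" "1/2 < x2" "x2 < (1+u)/2" using u by (auto simp: x2_def)
      have f0: "f [0,x2] = 1" using col1 X2 by auto
      have z1: "f [x1,x2] = 1"
      proof -
        have a: "\<bar>x1 - 1\<bar> \<le> \<bar>x1 - f [x1,x2]\<bar>" using sp1[OF s X1(1) X2(1), of 0] f0 by simp
        have c: "f [x1,x2] \<in> {0..1}" using rng[OF m X1(1) X2(1)] by simp
        show ?thesis using a c X1 by (auto simp: abs_if split: if_splits)
      qed
      have "\<bar>x2 - 0\<bar> \<le> \<bar>x2 - f [x1,x2]\<bar>" using sp2[OF s X1(1) X2(1), of 1] row0[of x1] X1 by simp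
      then show ?thesis using z1 X2 by simp
    qed
  qed
qed


lemma inf_bounds:
  fixes g :: "real \<Rightarrow> real"
  assumes "\<And>z. z \<in> {0..1} \<Longrightarrow> 0 \<le> g z" "z0 \<in> {0..1}"
  shows "0 \<le> (INF z\<in>{0..1}. g z)" "(INF z\<in>{0..1}. g z) \<le> g z0"
proof -
  show "0 \<le> (INF z\<in>{0..1}. g z)" by (rule cINF_greatest) (use assms in auto)
  show "(INF z\<in>{0..1}. g z) \<le> g z0"
    by (rule cINF_lower) (use assms in \<open>auto intro!: bdd_belowI2[where m=0]\<close>)
qed

lemma ratio_use:
  fixes sc I S \<alpha> :: real
  assumes "sc \<le> \<alpha> * I" "0 \<le> I" "I \<le> S" "0 < sc"
  shows "sc \<le> \<alpha> * S"
proof -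
  have "0 < \<alpha> * I" using assms by linarith
  then have "\<alpha> > 0" using assms(2) using zero_less_mult_pos2 by (metis less_eq_real_def mult_zero_right order_less_irrefl)
  then show ?thesis using assms mult_left_mono[of I S \<alpha>] by linarith
qed

lemma scp_nonneg: "0 \<le> sc_p p y xs" unfolding sc_p_def by simp

lemma scinf_nonneg: "y \<in> {0..1} \<Longrightarrow> valid_profile xs \<Longrightarrow> xs \<noteq> [] \<Longrightarrow> 0 \<le> sc_inf y xs"
  unfolding sc_inf_def valid_profile_def agent_cost_def
  by (cases xs) (auto simp: Max_ge_iff)

lemma vp2: "a \<in> {0..1} \<Longrightarrow> b \<in> {0..1} \<Longrightarrow> valid_profile [a,b]"
  unfolding valid_profile_def by auto

lemma p_f00:
  assumes m: "mechanism f" and r: "approx_ratio_p p f \<alpha>" and p: "1 \<le> p"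
  shows "f [0,0] = 1"
proof -
  have "sc_p p (f [0,0]) [0,0] \<le> \<alpha> * (INF z\<in>{0..1}. sc_p p z [0,0])"
    using r unfolding approx_ratio_p_def by (auto simp: vp2)
  moreover have "0 \<le> (INF z\<in>{0..1}. sc_p p z [0,0])" "(INF z\<in>{0..1}. sc_p p z [0,0]) \<le> sc_p p 1 [0,0]"
    using inf_bounds[of "\<lambda>z. sc_p p z [0,0]" 1] scp_nonneg by auto
  moreover have "sc_p p 1 [0,0] = 0" by (simp add: sc_p_def agent_cost_def)
  ultimately have "sc_p p (f [0,0]) [0,0] \<le> 0" by (metis mult_zero_right order_antisym)
  then have "sc_p p (f [0,0]) [0,0] = 0" using scp_nonneg by (meson order_antisym)
  moreover have "f [0,0] \<in> {0..1}" using rng[OF m] by auto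
  ultimately show ?thesis using p by (simp add: sc_p_def agent_cost_def)
qed

lemma p_f11:
  assumes m: "mechanism f" and r: "approx_ratio_p p f \<alpha>" and p: "1 \<le> p"
  shows "f [1,1] = 0"
proof -
  have "sc_p p (f [1,1]) [1,1] \<le> \<alpha> * (INF z\<in>{0..1}. sc_p p z [1,1])"
    using r unfolding approx_ratio_p_def by (auto simp: vp2)
  moreover have "0 \<le> (INF z\<in>{0..1}. sc_p p z [1,1])" "(INF z\<in>{0..1}. sc_p p z [1,1]) \<le> sc_p p 0 [1,1]"
    using inf_bounds[of "\<lambda>z. sc_p p z [1,1]" 0] scp_nonneg by auto
  moreover have "sc_p p 0 [1,1] = 0" by (simp add: sc_p_def agent_cost_def)
  ultimately have "sc_p p (f [1,1]) [1,1] \<le> 0" by (metis mult_zero_right order_antisym)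
  then have "sc_p p (f [1,1]) [1,1] = 0" using scp_nonneg by (meson order_antisym)
  moreover have "f [1,1] \<in> {0..1}" using rng[OF m] by auto
  ultimately show ?thesis using p by (simp add: sc_p_def agent_cost_def)
qed

lemma i_f00:
  assumes m: "mechanism f" and r: "approx_ratio_inf f \<alpha>"
  shows "f [0,0] = 1"
proof -
  have "sc_inf (f [0,0]) [0,0] \<le> \<alpha> * (INF z\<in>{0..1}. sc_inf z [0,0])"
    using r unfolding approx_ratio_inf_def by (auto simp: vp2)
  moreover have "0 \<le> (INF z\<in>{0..1}. sc_inf z [0,0])" "(INF z\<in>{0..1}. sc_inf z [0,0]) \<le> sc_inf 1 [0,0]"
    using inf_bounds[of "\<lambda>z. sc_inf z [0,0]" 1] scinf_nonneg vp2 by auto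
  moreover have "sc_inf 1 [0,0] = 0" by (simp add: sc_inf_def agent_cost_def)
  ultimately have "sc_inf (f [0,0]) [0,0] \<le> 0" by (metis mult_zero_right order_antisym)
  moreover have "f [0,0] \<in> {0..1}" using rng[OF m] by auto
  ultimately show ?thesis by (simp add: sc_inf_def agent_cost_def)
qed

lemma i_f11:
  assumes m: "mechanism f" and r: "approx_ratio_inf f \<alpha>"
  shows "f [1,1] = 0"
proof -
  have "sc_inf (f [1,1]) [1,1] \<le> \<alpha> * (INF z\<in>{0..1}. sc_inf z [1,1])"
    using r unfolding approx_ratio_inf_def by (auto simp: vp2)
  moreover have "0 \<le> (INF z\<in>{0..1}. sc_inf z [1,1])" "(INF z\<in>{0..1}. sc_inf z [1,1]) \<le> sc_inf 0 [1,1]"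
    using inf_bounds[of "\<lambda>z. sc_inf z [1,1]" 0] scinf_nonneg vp2 by auto
  moreover have "sc_inf 0 [1,1] = 0" by (simp add: sc_inf_def agent_cost_def)
  ultimately have "sc_inf (f [1,1]) [1,1] \<le> 0" by (metis mult_zero_right order_antisym)
  moreover have "f [1,1] \<in> {0..1}" using rng[OF m] by auto
  ultimately show ?thesis by (simp add: sc_inf_def agent_cost_def)
qed


lemma limit_p:
  fixes p \<alpha> :: real
  assumes p: "1 \<le> p" and h: "\<And>x. 0 \<le> x \<Longrightarrow> x < 1/2 \<Longrightarrow> (1 + x powr p) powr (1/p) \<le> \<alpha> * (1 - x)"
  shows "(2 powr p + 1) powr (1 / p) \<le> \<alpha>"
proof -
  have l1: "((\<lambda>x. (1 + x powr p) powr (1/p)) \<longlongrightarrow> (1 + (1/2) powr p) powr (1/p)) (at_left (1/2::real))"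
    using p by (intro tendsto_intros) auto
  have l2: "((\<lambda>x. \<alpha> * (1 - x)) \<longlongrightarrow> \<alpha> * (1 - 1/2)) (at_left (1/2::real))"
    by (intro tendsto_intros)
  have ev: "eventually (\<lambda>x. (1 + x powr p) powr (1/p) \<le> \<alpha> * (1 - x)) (at_left (1/2::real))"
    by (rule eventually_mono[OF eventually_at_left_real[of 0 "1/2::real"]]) (auto intro: h)
  have le: "(1 + (1/2) powr p) powr (1/p) \<le> \<alpha> * (1 - 1/2)"
    by (rule tendsto_le[OF _ l2 l1 ev]) simp
  have "(2 powr p + 1) = 2 powr p * (1 + (1/2) powr p)"
    by (simp add: distrib_left powr_divide)
  then have "(2 powr p + 1) powr (1/p) = (2 powr p) powr (1/p) * (1 + (1/2) powr p) powr (1/p)"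
    by (simp add: powr_mult)
  also have "(2 powr p) powr (1/p) = 2" using p by (simp add: powr_powr)
  finally show ?thesis using le by simp
qed

lemma limit_inf:
  fixes \<alpha> :: real
  assumes h: "\<And>x. 0 \<le> x \<Longrightarrow> x < 1/2 \<Longrightarrow> 1 \<le> \<alpha> * (1 - x)"
  shows "2 \<le> \<alpha>"
proof -
  have l2: "((\<lambda>x. \<alpha> * (1 - x)) \<longlongrightarrow> \<alpha> * (1 - 1/2)) (at_left (1/2::real))"
    by (intro tendsto_intros)
  have ev: "eventually (\<lambda>x. 1 \<le> \<alpha> * (1 - x)) (at_left (1/2::real))"
    by (rule eventually_mono[OF eventually_at_left_real[of 0 "1/2::real"]]) (auto intro: h)
  have le: "1 \<le> \<alpha> * (1 - 1/2)"
    by (rule tendsto_le[OF _ l2 tendsto_const ev]) simp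
  then show ?thesis by simp
qed


lemma p_bad:
  assumes m: "mechanism f" and s: "strategyproof f" and r: "approx_ratio_p p f \<alpha>" and p: "1 \<le> p"
  shows "(2 powr p + 1) powr (1 / p) \<le> \<alpha>"
proof (rule limit_p[OF p])
  fix x :: real assume x: "0 \<le> x" "x < 1/2"
  have "0 < 1 + x powr p" by (simp add: add_pos_nonneg)
  then have pos: "0 < (1 + x powr p) powr (1/p)" by simp
  have root: "((1 - x) powr p) powr (1/p) = 1 - x" using p x by (simp add: powr_powr)
  have "(\<forall>x. 0 \<le> x \<and> x < 1/2 \<longrightarrow> f [x,1] = 1) \<or> (\<forall>x. 1/2 < x \<and> x \<le> 1 \<longrightarrow> f [0,x] = 0)"
    using key[OF m s p_f00[OF m r p] p_f11[OF m r p]] .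
  then show "(1 + x powr p) powr (1/p) \<le> \<alpha> * (1 - x)"
  proof
    assume A: "\<forall>x. 0 \<le> x \<and> x < 1/2 \<longrightarrow> f [x,1] = 1"
    have vp: "valid_profile [x,1]" using x by (simp add: vp2)
    have e1: "sc_p p (f [x,1]) [x,1] = (1 + x powr p) powr (1/p)"
      using A x by (simp add: sc_p_def agent_cost_def add.commute)
    have e2: "sc_p p 0 [x,1] = 1 - x"
      using x root by (simp add: sc_p_def agent_cost_def)
    have "sc_p p (f [x,1]) [x,1] \<le> \<alpha> * (INF z\<in>{0..1}. sc_p p z [x,1])"
      using r vp unfolding approx_ratio_p_def by auto
    moreover have "0 \<le> (INF z\<in>{0..1}. sc_p p z [x,1])" "(INF z\<in>{0..1}. sc_p p z [x,1]) \<le> sc_p p 0 [x,1]"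
      using inf_bounds[of "\<lambda>z. sc_p p z [x,1]" 0] scp_nonneg by auto
    ultimately show ?thesis using ratio_use e1 e2 pos by metis
  next
    assume B: "\<forall>x. 1/2 < x \<and> x \<le> 1 \<longrightarrow> f [0,x] = 0"
    define y where "y = 1 - x"
    have y: "1/2 < y" "y \<le> 1" using x by (auto simp: y_def)
    have vp: "valid_profile [0,y]" using y by (simp add: vp2)
    have e1: "sc_p p (f [0,y]) [0,y] = (1 + x powr p) powr (1/p)"
      using B y by (simp add: sc_p_def agent_cost_def y_def)
    have e2: "sc_p p 1 [0,y] = 1 - x"
      using y root by (simp add: sc_p_def agent_cost_def y_def)
    have "sc_p p (f [0,y]) [0,y] \<le> \<alpha> * (INF z\<in>{0..1}. sc_p p z [0,y])"
      using r vp unfolding approx_ratio_p_def by auto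
    moreover have "0 \<le> (INF z\<in>{0..1}. sc_p p z [0,y])" "(INF z\<in>{0..1}. sc_p p z [0,y]) \<le> sc_p p 1 [0,y]"
      using inf_bounds[of "\<lambda>z. sc_p p z [0,y]" 1] scp_nonneg by auto
    ultimately show ?thesis using ratio_use e1 e2 pos by metis
  qed
qed

lemma inf_bad:
  assumes m: "mechanism f" and s: "strategyproof f" and r: "approx_ratio_inf f \<alpha>"
  shows "2 \<le> \<alpha>"
proof (rule limit_inf)
  fix x :: real assume x: "0 \<le> x" "x < 1/2"
  have "(\<forall>x. 0 \<le> x \<and> x < 1/2 \<longrightarrow> f [x,1] = 1) \<or> (\<forall>x. 1/2 < x \<and> x \<le> 1 \<longrightarrow> f [0,x] = 0)"
    using key[OF m s i_f00[OF m r] i_f11[OF m r]] .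
  then show "1 \<le> \<alpha> * (1 - x)"
  proof
    assume A: "\<forall>x. 0 \<le> x \<and> x < 1/2 \<longrightarrow> f [x,1] = 1"
    have vp: "valid_profile [x,1]" using x by (simp add: vp2)
    have e1: "sc_inf (f [x,1]) [x,1] = 1"
      using A x by (simp add: sc_inf_def agent_cost_def)
    have e2: "sc_inf 0 [x,1] = 1 - x"
      using x by (simp add: sc_inf_def agent_cost_def)
    have "sc_inf (f [x,1]) [x,1] \<le> \<alpha> * (INF z\<in>{0..1}. sc_inf z [x,1])"
      using r vp unfolding approx_ratio_inf_def by auto
    moreover have "0 \<le> (INF z\<in>{0..1}. sc_inf z [x,1])" "(INF z\<in>{0..1}. sc_inf z [x,1]) \<le> sc_inf 0 [x,1]"
      using inf_bounds[of "\<lambda>z. sc_inf z [x,1]" 0] scinf_nonneg vp by auto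
    ultimately show ?thesis using ratio_use[of 1] e1 e2 by (metis zero_less_one)
  next
    assume B: "\<forall>x. 1/2 < x \<and> x \<le> 1 \<longrightarrow> f [0,x] = 0"
    define y where "y = 1 - x"
    have y: "1/2 < y" "y \<le> 1" using x by (auto simp: y_def)
    have vp: "valid_profile [0,y]" using y by (simp add: vp2)
    have e1: "sc_inf (f [0,y]) [0,y] = 1"
      using B y by (simp add: sc_inf_def agent_cost_def y_def)
    have e2: "sc_inf 1 [0,y] = 1 - x"
      using y by (simp add: sc_inf_def agent_cost_def y_def)
    have "sc_inf (f [0,y]) [0,y] \<le> \<alpha> * (INF z\<in>{0..1}. sc_inf z [0,y])"
      using r vp unfolding approx_ratio_inf_def by auto
    moreover have "0 \<le> (INF z\<in>{0..1}. sc_inf z [0,y])" "(INF z\<in>{0..1}. sc_inf z [0,y]) \<le> sc_inf 1 [0,y]"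
      using inf_bounds[of "\<lambda>z. sc_inf z [0,y]" 1] scinf_nonneg vp by auto
    ultimately show ?thesis using ratio_use[of 1] e1 e2 by (metis zero_less_one)
  qed
qed

theorem theorem11:
  fixes f :: "real list \<Rightarrow> real"
  assumes "mechanism f" and "strategyproof f"
  shows "(\<forall>p \<alpha>. 1 \<le> p \<and> approx_ratio_p p f \<alpha> \<longrightarrow> (2 powr p + 1) powr (1 / p) \<le> \<alpha>)
       \<and> (\<forall>\<alpha>. approx_ratio_inf f \<alpha> \<longrightarrow> 2 \<le> \<alpha>)"
  using p_bad[OF assms] inf_bad[OF assms] by blast

end
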